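(* Let $\mathbf{H}\in\mathcal{S}^{12}$, $\mathbf{H}\succ0$, and let $(\bar{\mathbf{R}},\bar{\mathbf{t}})\in\mathrm{SO}(3)\times\mathbb{R}^3$. Let $\mathbf{P}_r=[\mathbf{I}_9\ \mathbf{0}_{9\times3}]$ and $\mathbf{H}_r=(\mathbf{P}_r\mathbf{H}^{-1}\mathbf{P}_r^\mathsf{T})^{-1}$. Let $\mathbf{P}_\theta\in\mathbb{R}^{3\times9}$ be the matrix such that for every $\mathbf{M}\in\mathbb{R}^{3\times3}$, $\mathbf{P}_\theta\mathrm{vec}(\mathbf{M})=[M_{32}-M_{23},\ M_{13}-M_{31},\ M_{21}-M_{12}]^\mathsf{T}$, and define $$\mathbf{H}_\theta=4\left(\mathbf{P}_\theta\left[(\bar{\mathbf{R}}^\mathsf{T}\otimes\mathbf{I}_3)^\mathsf{T}\mathbf{H}_r(\bar{\mathbf{R}}^\mathsf{T}\otimes\mathbf{I}_3)\right]^{-1}\mathbf{P}_\theta^\mathsf{T}\right)^{-1}.$$ Suppose $(\mathbf{R},\mathbf{t})\in\mathrm{SO}(3)\times\mathbb{R}^3$ satisfies $$\begin{bmatrix}\mathrm{vec}(\mathbf{R}-\bar{\mathbf{R}})\\ \mathbf{t}-\bar{\mathbf{t}}\end{bmatrix}^\mathsf{T}\mathbf{H}\begin{bmatrix}\mathrm{vec}(\mathbf{R}-\bar{\mathbf{R}})\\ \mathbf{t}-\bar{\mathbf{t}}\end{bmatrix}\le1,$$ and write $\mathbf{R}=\mathbf{R}_{\boldsymbol{\omega}}(\theta)\bar{\mathbf{R}}$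 with axis $\boldsymbol{\omega}\in\mathbb{S}^2$ and angle $\theta$. If $\theta\le90^\circ$, then $$(\boldsymbol{\omega}\sin\theta)^\mathsf{T}\mathbf{H}_\theta(\boldsymbol{\omega}\sin\theta)\le1.$$ Moreover, for $\boldsymbol{\xi}=\boldsymbol{\omega}\sin\theta$ one has $\boldsymbol{\omega}=\boldsymbol{\xi}/\|\boldsymbol{\xi}\|_2$ and $\sin\theta=\|\boldsymbol{\xi}\|_2$.
   Context: $\mathrm{vec}$ stacks columns; $\otimes$ is the Kronecker product; $\mathbb{S}^2$ is the unit sphere in $\mathbb{R}^3$. $\mathbf{R}_{\boldsymbol{\omega}}(\theta)$ is the rotation by angle $\theta$ about axis $\boldsymbol{\omega}$ given by Rodrigues' formula $\mathbf{R}_{\boldsymbol{\omega}}(\theta)=\mathbf{I}_3+\hat{\boldsymbol{\omega}}\sin\theta+\hat{\boldsymbol{\omega}}^2(1-\cos\theta)$, where $\hat{\boldsymbol{\omega}}$ is the skew-symmetric cross-product matrix with rows $(0,-\omega_3,\omega_2)$, $(\omega_3,0,-\omega_1)$, $(-\omega_2,\omega_1,0)$. *)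

theory Defs
  imports "HOL-Analysis.Analysis"
begin

text \<open>A 3x3 matrix M :: real^3^3 has entry M_ij = M$i$j.
 Its column-stacking vectorisation vec(M) is indexed by pairs (i,j) :: 3 \<times> 3,
 where the pair (i,j) stands for position (j-1)*3+i of the usual vec(M) in R^9.
 A vector of R^12 = [vec(.); t] is indexed by the sum type (3 \<times> 3) + 3,
 Inl p being the first nine coordinates and Inr k the last three.\<close>

definition vecM :: "real^'n^'m \<Rightarrow> real^('m \<times> 'n)" where
  "vecM M = (\<chi> ij. M $ fst ij $ snd ij)"

text \<open>Kronecker product, indexed compatibly with vecM: the pair (b,a) stands for row
 (a-1)*p+b and the pair (d,c) for column (c-1)*q+d, so that entry
 (A \<otimes> B)_{(a-1)p+b,(c-1)q+d} = A_ac B_bd.\<close>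
definition kron :: "real^'n^'m \<Rightarrow> real^'q^'p \<Rightarrow> real^('q \<times> 'n)^('p \<times> 'm)" where
  "kron A B = (\<chi> ba dc. A $ snd ba $ snd dc * B $ fst ba $ fst dc)"

definition sym_mat :: "real^'n^'n \<Rightarrow> bool" where
  "sym_mat H \<longleftrightarrow> transpose H = H"

definition pos_def :: "real^'n^'n \<Rightarrow> bool" where
  "pos_def H \<longleftrightarrow> sym_mat H \<and> (\<forall>x. x \<noteq> 0 \<longrightarrow> x \<bullet> (H *v x) > 0)"

definition SO3 :: "(real^3^3) set" where
  "SO3 = {R. orthogonal_matrix R \<and> det R = 1}"

definition hat :: "real^3 \<Rightarrow> real^3^3" where
  "hat w = vector [vector [0, - w$3, w$2],
                   vector [w$3, 0, - w$1],
                   vector [- w$2, w$1, 0]]"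

definition rodrigues :: "real^3 \<Rightarrow> real \<Rightarrow> real^3^3" where
  "rodrigues w \<theta> = mat 1 + sin \<theta> *\<^sub>R hat w + (1 - cos \<theta>) *\<^sub>R (hat w ** hat w)"

definition Pr :: "real^((3 \<times> 3) + 3)^(3 \<times> 3)" where
  "Pr = (\<chi> p q. if q = Inl p then 1 else 0)"

definition Ptheta :: "real^(3 \<times> 3)^3" where
  "Ptheta = vector [
     (\<chi> q. if q = (3,2) then 1 else if q = (2,3) then -1 else 0),
     (\<chi> q. if q = (1,3) then 1 else if q = (3,1) then -1 else 0),
     (\<chi> q. if q = (2,1) then 1 else if q = (1,2) then -1 else 0)]"

definition stack :: "real^(3 \<times> 3) \<Rightarrow> real^3 \<Rightarrow> real^((3 \<times> 3) + 3)" where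
  "stack v t = (\<chi> i. case i of Inl p \<Rightarrow> v $ p | Inr k \<Rightarrow> t $ k)"

definition Hr :: "real^((3 \<times> 3) + 3)^((3 \<times> 3) + 3) \<Rightarrow> real^(3 \<times> 3)^(3 \<times> 3)" where
  "Hr H = matrix_inv (Pr ** matrix_inv H ** transpose Pr)"

definition Htheta :: "real^((3 \<times> 3) + 3)^((3 \<times> 3) + 3) \<Rightarrow> real^3^3 \<Rightarrow> real^3^3" where
  "Htheta H Rb = (let K = kron (transpose Rb) (mat 1 :: real^3^3) in
     4 *\<^sub>R matrix_inv (Ptheta ** matrix_inv (transpose K ** Hr H ** K) ** transpose Ptheta))"

end

theory Submission
  imports Defs
begin

lemma minv:
  fixes A :: "real^'n^'n"
  assumes "invertible A"
  shows "A ** matrix_inv A = mat 1" "matrix_inv A ** A = mat 1"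
proof -
  have "\<exists>A'. A ** A' = mat 1 \<and> A' ** A = mat 1" using assms invertible_def by blast
  then have "A ** matrix_inv A = mat 1 \<and> matrix_inv A ** A = mat 1"
    unfolding matrix_inv_def by (rule someI_ex)
  then show "A ** matrix_inv A = mat 1" "matrix_inv A ** A = mat 1" by auto
qed

lemma dot_mv: "(A *v x) \<bullet> (y::real^'m) = x \<bullet> (transpose A *v (y::real^'m))"
  by (metis dot_lmul_matrix inner_commute transpose_matrix_vector)

lemma pd_inv_ker:
  fixes G :: "real^'n^'n"
  assumes "pos_def G"
  shows "invertible G"
proof -
  have "\<forall>x. G *v x = 0 \<longrightarrow> x = 0"
    using assms unfolding pos_def_def by (metis inner_zero_right less_irrefl)
  then show ?thesis
    using invertible_left_inverse matrix_left_invertible_ker by blast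
qed

lemma pd_psd:
  assumes "pos_def (G::real^'n^'n)"
  shows "0 \<le> x \<bullet> (G *v x)"
  using assms unfolding pos_def_def by (cases "x = 0") (auto intro: less_imp_le)

lemma pd_sym:
  assumes "pos_def (G::real^'n^'n)"
  shows "x \<bullet> (G *v y) = y \<bullet> (G *v x)"
proof -
  have "transpose G = G" using assms unfolding pos_def_def sym_mat_def by auto
  then show ?thesis by (metis dot_mv inner_commute)
qed

lemma pd_matrix_inv:
  fixes G :: "real^'n^'n"
  assumes "pos_def G"
  shows "pos_def (matrix_inv G)"
proof -
  have inv: "invertible G" using pd_inv_ker assms by blast
  note m = minv[OF inv]
  have tG: "transpose G = G" using assms unfolding pos_def_def sym_mat_def by auto
  have "transpose (matrix_inv G) ** G = mat 1"
    by (metis m(1) matrix_transpose_mul tG transpose_mat)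
  then have "transpose (matrix_inv G) = matrix_inv G"
    by (metis m(1) matrix_mul_assoc matrix_mul_lid matrix_mul_rid)
  moreover have "x \<bullet> (matrix_inv G *v x) > 0" if "x \<noteq> 0" for x
  proof -
    define y where "y = matrix_inv G *v x"
    have xy: "x = G *v y" unfolding y_def by (simp add: m(1) matrix_vector_mul_assoc)
    have "y \<noteq> 0" using xy that by auto
    then have "y \<bullet> (G *v y) > 0" using assms unfolding pos_def_def by auto
    then show ?thesis using xy y_def by (metis inner_commute)
  qed
  ultimately show ?thesis unfolding pos_def_def sym_mat_def by auto
qed

lemma pd_congr:
  fixes A :: "real^'n^'n" and P :: "real^'n^'m"
  assumes "pos_def A" and "\<forall>z. transpose P *v z = 0 \<longrightarrow> z = 0"
  shows "pos_def (P ** A ** transpose P)"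
proof -
  have tA: "transpose A = A" using assms unfolding pos_def_def sym_mat_def by auto
  have "transpose (P ** A ** transpose P) = P ** A ** transpose P"
    by (simp add: matrix_transpose_mul tA matrix_mul_assoc)
  moreover have "z \<bullet> ((P ** A ** transpose P) *v z) > 0" if "z \<noteq> 0" for z
  proof -
    have "transpose P *v z \<noteq> 0" using assms(2) that by blast
    then have "(transpose P *v z) \<bullet> (A *v (transpose P *v z)) > 0"
      using assms(1) unfolding pos_def_def by auto
    also have "(transpose P *v z) \<bullet> (A *v (transpose P *v z)) = z \<bullet> ((P ** A ** transpose P) *v z)"
    proof -
      have "(transpose P *v z) \<bullet> (A *v (transpose P *v z)) = z \<bullet> (P *v (A *v (transpose P *v z)))"
        by (metis dot_mv transpose_transpose inner_commute)
      also have "P *v (A *v (transpose P *v z)) = (P ** A ** transpose P) *v z"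
        by (simp only: matrix_vector_mul_assoc matrix_mul_assoc)
      finally show ?thesis .
    qed
    finally show ?thesis .
  qed
  ultimately show ?thesis unfolding pos_def_def sym_mat_def by auto
qed

lemma key:
  fixes G :: "real^'n^'n" and P :: "real^'n^'m"
  assumes G: "pos_def G" and P: "\<forall>z. transpose P *v z = 0 \<longrightarrow> z = 0"
  shows "(P *v u) \<bullet> (matrix_inv (P ** matrix_inv G ** transpose P) *v (P *v u)) \<le> u \<bullet> (G *v u)"
    and "pos_def (matrix_inv (P ** matrix_inv G ** transpose P))"
proof -
  define A where "A = matrix_inv G"
  define S where "S = P ** A ** transpose P"
  have pA: "pos_def A" unfolding A_def using pd_matrix_inv G by blast
  have pS: "pos_def S" unfolding S_def using pd_congr pA P by blast
  then show "pos_def (matrix_inv (P ** matrix_inv G ** transpose P))"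
    using pd_matrix_inv A_def S_def by blast
  have mS: "S ** matrix_inv S = mat 1" using minv pd_inv_ker pS by blast
  have mG: "G ** A = mat 1" using minv pd_inv_ker G A_def by blast
  define y where "y = P *v u"
  define z where "z = matrix_inv S *v y"
  define w where "w = A *v (transpose P *v z)"
  define q where "q = y \<bullet> z"
  have Sz: "S *v z = y" unfolding z_def by (simp add: matrix_vector_mul_assoc mS)
  have Gw: "G *v w = transpose P *v z" unfolding w_def by (simp add: matrix_vector_mul_assoc mG)
  have Pw: "P *v w = S *v z" unfolding w_def S_def by (simp only: matrix_vector_mul_assoc matrix_mul_assoc)
  have q1: "u \<bullet> (G *v w) = q" unfolding q_def Gw y_def by (simp add: dot_mv)
  have q2: "w \<bullet> (G *v w) = q" unfolding Gw q_def
    by (metis dot_mv Pw Sz inner_commute transpose_transpose)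
  have q3: "w \<bullet> (G *v u) = q" using q1 pd_sym[OF G] by metis
  have "0 \<le> (u - w) \<bullet> (G *v (u - w))" using pd_psd G by blast
  also have "\<dots> = u \<bullet> (G *v u) - q"
    by (simp add: matrix_vector_mult_diff_distrib inner_diff_left inner_diff_right q1 q2 q3)
  finally show "(P *v u) \<bullet> (matrix_inv (P ** matrix_inv G ** transpose P) *v (P *v u)) \<le> u \<bullet> (G *v u)"
    using q_def y_def z_def S_def A_def by simp
qed



lemma sum_prod_delta:
  "(\<Sum>dc\<in>(UNIV::('m::finite \<times> 'n::finite) set). (if b = fst dc then 1 else 0) * (g dc::real))
     = (\<Sum>c\<in>UNIV. g (b,c))"
proof -
  have "(\<Sum>dc\<in>(UNIV::('m \<times> 'n) set). (if b = fst dc then 1 else 0) * g dc)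
     = (\<Sum>d\<in>UNIV. \<Sum>c\<in>UNIV. (if b = d then 1 else 0) * g (d,c))"
    unfolding UNIV_Times_UNIV[symmetric] sum.cartesian_product by (intro sum.cong) (auto simp: case_prod_beta)
  also have "\<dots> = (\<Sum>d\<in>UNIV. if b = d then (\<Sum>c\<in>UNIV. g (d,c)) else 0)"
    by (intro sum.cong) auto
  also have "\<dots> = (\<Sum>c\<in>UNIV. g (b,c))" by (simp add: sum.delta)
  finally show ?thesis .
qed

lemma vecM_mult: "vecM (M ** (B::real^'n^'n)) = kron (transpose B) (mat 1 :: real^'m^'m) *v vecM (M::real^'n^'m)"
proof -
  have "vecM (M ** B) $ (b,a) = (kron (transpose B) (mat 1 :: real^'m^'m) *v vecM M) $ (b,a)" for b a
  proof -
    have "(kron (transpose B) (mat 1 :: real^'m^'m) *v vecM M) $ (b,a)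
       = (\<Sum>dc\<in>UNIV. (if b = fst dc then 1 else 0) * (B $ snd dc $ a * M $ fst dc $ snd dc))"
      unfolding matrix_vector_mult_def kron_def transpose_def mat_def vecM_def
      by (simp only: vec_lambda_beta) (intro sum.cong, auto)
    also have "\<dots> = (\<Sum>c\<in>UNIV. B $ c $ a * M $ b $ c)"
      by (simp only: sum_prod_delta fst_conv snd_conv)
    also have "\<dots> = vecM (M ** B) $ (b,a)"
      unfolding vecM_def matrix_matrix_mult_def by (simp add: mult.commute)
    finally show ?thesis by simp
  qed
  then show ?thesis by (simp add: vec_eq_iff)
qed

lemma if01: "(if c then 1 else 0) * (x::real) = (if c then x else 0)" by simp

lemma delta1: "(\<Sum>q\<in>(UNIV::'a::finite set). (if q = a then 1 else 0) * (f q::real)) = f a"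
  by (simp add: if01 sum.delta)

lemma delta2: "(\<Sum>q\<in>(UNIV::'a::finite set). (if a = q then 1 else 0) * (f q::real)) = f a"
  by (simp add: if01 sum.delta')

lemma Pr_row: "(Pr *v s) $ p = s $ Inl p"
  unfolding matrix_vector_mult_def Pr_def by (simp only: vec_lambda_beta delta1)

lemma Pr_stack: "Pr *v stack v t = v"
  by (simp add: vec_eq_iff Pr_row stack_def)

lemma Pr_inj: "\<forall>z. transpose Pr *v z = 0 \<longrightarrow> z = 0"
proof (intro allI impI)
  fix z :: "real^(3\<times>3)"
  assume a: "transpose Pr *v z = 0"
  have "(transpose Pr *v z) $ Inl p = z $ p" for p
    unfolding matrix_vector_mult_def transpose_def Pr_def by (simp only: vec_lambda_beta sum.inject delta2)
  then show "z = 0" using a by (simp add: vec_eq_iff)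
qed

lemma ne3: "((3::3),(2::3)) \<noteq> (2,3)" "((1::3),(3::3)) \<noteq> (3,1)" "((2::3),(1::3)) \<noteq> (1,2)" by simp_all

lemma rowsum: "(a::'a::finite) \<noteq> b \<Longrightarrow> (\<Sum>q\<in>UNIV. (if q = a then 1 else if q = b then -1 else 0) * (f q::real)) = f a - f b"
proof -
  assume ab: "a \<noteq> b"
  have "(\<Sum>q\<in>UNIV. (if q = a then 1 else if q = b then -1 else 0) * f q) = (\<Sum>q\<in>UNIV. (if q = a then f q else 0) - (if q = b then f q else 0))"
    using ab by (intro sum.cong) auto
  then show ?thesis by (simp add: sum_subtractf sum.delta sum.delta')
qed

lemma Ptheta_vec: "Ptheta *v vecM M = vector [M$3$2 - M$2$3, M$1$3 - M$3$1, M$2$1 - M$1$2]"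
  unfolding vec_eq_iff forall_3
  by (simp add: Ptheta_def matrix_vector_mult_def vecM_def rowsum ne3)

lemma Ptheta_inj: "\<forall>z. transpose Ptheta *v z = 0 \<longrightarrow> z = 0"
proof (intro allI impI)
  fix z :: "real^3"
  assume a: "transpose Ptheta *v z = 0"
  have "(transpose Ptheta *v z) $ (3,2) = z $ 1" "(transpose Ptheta *v z) $ (1,3) = z $ 2"
     "(transpose Ptheta *v z) $ (2,1) = z $ 3"
    by (simp_all add: Ptheta_def transpose_def matrix_vector_mult_def sum_3 vector_3)
  then show "z = 0" using a by (simp add: vec_eq_iff forall_3)
qed

lemma hat_e: "hat w $ 1 $ 1 = 0" "hat w $ 1 $ 2 = - w$3" "hat w $ 1 $ 3 = w$2"
  "hat w $ 2 $ 1 = w$3" "hat w $ 2 $ 2 = 0" "hat w $ 2 $ 3 = - w$1"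
  "hat w $ 3 $ 1 = - w$2" "hat w $ 3 $ 2 = w$1" "hat w $ 3 $ 3 = 0"
  by (simp_all add: hat_def)
lemma hh: "(hat w ** hat w) $ i $ j = (hat w ** hat w) $ j $ i"
proof -
  have "\<forall>i j. (hat w ** hat w) $ i $ j = (hat w ** hat w) $ j $ i"
    unfolding matrix_matrix_mult_def by (simp add: forall_3 sum_3 hat_e algebra_simps)
  then show ?thesis by blast
qed

lemma rod_skew: "Ptheta *v vecM (rodrigues w th - mat 1) = (2 * sin th) *\<^sub>R w"
proof -
  have e: "(rodrigues w th - mat 1) $ i $ j - (rodrigues w th - mat 1) $ j $ i = sin th * (hat w $ i $ j - hat w $ j $ i)" for i j
  proof -
    have "mat 1 $ i $ j = (mat 1 :: real^3^3) $ j $ i" by (simp add: mat_def)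
    then show ?thesis using hh[of w i j] by (simp add: rodrigues_def algebra_simps)
  qed
  show ?thesis
    by (simp only: Ptheta_vec e hat_e) (simp add: vec_eq_iff forall_3)
qed

lemma mm_diff: "((A::real^'n^'m) - B) ** (C::real^'p^'n) = A ** C - B ** C"
  by (simp add: matrix_matrix_mult_def vec_eq_iff sum_subtractf algebra_simps)

lemma vecM_zero: "vecM (M::real^'n^'m) = 0 \<Longrightarrow> M = 0"
  by (simp add: vecM_def vec_eq_iff)

lemma K_inj:
  assumes "Rb \<in> SO3"
  shows "\<forall>u. transpose (transpose (kron (transpose Rb) (mat 1::real^3^3))) *v u = 0 \<longrightarrow> u = 0"
proof (intro allI impI)
  fix u :: "real^(3\<times>3)"
  assume a: "transpose (transpose (kron (transpose Rb) (mat 1::real^3^3))) *v u = 0"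
  define M :: "real^3^3" where "M = (\<chi> i j. u $ (i,j))"
  have uM: "vecM M = u" by (simp add: M_def vecM_def vec_eq_iff)
  have "vecM (M ** Rb) = 0" using a by (simp only: transpose_transpose vecM_mult uM)
  then have "M ** Rb = 0" by (rule vecM_zero)
  moreover have "Rb ** transpose Rb = mat 1" using assms unfolding SO3_def orthogonal_matrix_def by auto
  ultimately have "M = 0" by (metis matrix_mul_assoc matrix_mul_rid times0_left)
  then show "u = 0" using uM by (simp add: vecM_def vec_eq_iff)
qed

theorem proposition6:
  fixes H :: "real^((3 \<times> 3) + 3)^((3 \<times> 3) + 3)"
    and Rb R :: "real^3^3" and tb t \<omega> :: "real^3" and \<theta> :: real
  assumes "pos_def H"
    and "Rb \<in> SO3" and "R \<in> SO3"
    and "stack (vecM (R - Rb)) (t - tb) \<bullet> (H *v stack (vecM (R - Rb)) (t - tb)) \<le> 1"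
    and "norm \<omega> = 1" and "0 \<le> \<theta>"
    and "R = rodrigues \<omega> \<theta> ** Rb"
    and "\<theta> \<le> pi / 2"
  shows "(sin \<theta> *\<^sub>R \<omega>) \<bullet> (Htheta H Rb *v (sin \<theta> *\<^sub>R \<omega>)) \<le> 1
    \<and> sin \<theta> = norm (sin \<theta> *\<^sub>R \<omega>)
    \<and> (0 < \<theta> \<longrightarrow> \<omega> = (1 / norm (sin \<theta> *\<^sub>R \<omega>)) *\<^sub>R (sin \<theta> *\<^sub>R \<omega>))"
proof -
  define x where "x = stack (vecM (R - Rb)) (t - tb)"
  define v where "v = vecM (R - Rb)"
  define K where "K = kron (transpose Rb) (mat 1 :: real^3^3)"
  define u where "u = vecM (rodrigues \<omega> \<theta> - mat 1)"
  define G where "G = transpose K ** Hr H ** K"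
  define Mi where "Mi = matrix_inv (Ptheta ** matrix_inv G ** transpose Ptheta)"
  define \<xi> where "\<xi> = sin \<theta> *\<^sub>R \<omega>"
  have vx: "v = Pr *v x" unfolding x_def v_def by (simp only: Pr_stack)
  have s1: "v \<bullet> (Hr H *v v) \<le> x \<bullet> (H *v x)"
    unfolding vx Hr_def by (rule key(1)[OF assms(1) Pr_inj])
  have pHr: "pos_def (Hr H)" unfolding Hr_def by (rule key(2)[OF assms(1) Pr_inj])
  have "R - Rb = (rodrigues \<omega> \<theta> - mat 1) ** Rb"
    using assms(7) by (simp add: mm_diff)
  then have vu: "v = K *v u" unfolding v_def K_def u_def by (simp only: vecM_mult)
  have pG: "pos_def G" unfolding G_def
    using pd_congr[OF pHr K_inj[OF assms(2)]] by (simp add: K_def)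
  have s2: "(Ptheta *v u) \<bullet> (Mi *v (Ptheta *v u)) \<le> u \<bullet> (G *v u)"
    unfolding Mi_def by (rule key(1)[OF pG Ptheta_inj])
  have uG: "u \<bullet> (G *v u) = v \<bullet> (Hr H *v v)"
    unfolding G_def vu by (simp only: dot_mv[symmetric] matrix_vector_mul_assoc[symmetric] transpose_transpose)
  have Pu: "Ptheta *v u = 2 *\<^sub>R \<xi>" unfolding u_def \<xi>_def by (simp add: rod_skew)
  have Ht: "Htheta H Rb = 4 *\<^sub>R Mi" unfolding Htheta_def Mi_def G_def K_def Let_def by simp
  have "(4 *\<^sub>R Mi) *v \<xi> = 4 *\<^sub>R (Mi *v \<xi>)" by (simp add: scaleR_matrix_vector_assoc)
  then have e1: "\<xi> \<bullet> (Htheta H Rb *v \<xi>) = (2 *\<^sub>R \<xi>) \<bullet> (Mi *v (2 *\<^sub>R \<xi>))"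
    unfolding Ht by (simp add: matrix_vector_mult_scaleR)
  have e2: "(2 *\<^sub>R \<xi>) \<bullet> (Mi *v (2 *\<^sub>R \<xi>)) \<le> u \<bullet> (G *v u)" using s2 unfolding Pu .
  have e3: "x \<bullet> (H *v x) \<le> 1" using assms(4) unfolding x_def .
  have "\<xi> \<bullet> (Htheta H Rb *v \<xi>) \<le> 1" using e1 e2 e3 s1 uG by linarith
  then have c1: "\<xi> \<bullet> (Htheta H Rb *v \<xi>) \<le> 1" .
  have sn: "0 \<le> sin \<theta>" using assms(6,8) by (intro sin_ge_zero) auto
  have c2: "sin \<theta> = norm \<xi>" unfolding \<xi>_def using sn assms(5) by simp
  have c3: "\<omega> = (1 / norm \<xi>) *\<^sub>R \<xi>" if "0 < \<theta>"
  proof -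
    have "0 < sin \<theta>" using that assms(8) by (intro sin_gt_zero) auto
    then show ?thesis unfolding c2[symmetric] \<xi>_def using assms(5) by simp
  qed
  show ?thesis using c1 c2 c3 unfolding \<xi>_def by blast
qed

end
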